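(* Let $\alpha>0$, $0<p<1$, $\beta_1,\beta_2,\beta_3>0$, let $V_1,V_2,V_3$ be independent with $V_i\sim EDW(\alpha,p,\beta_i)$, and let $X_1=\max\{V_1,V_3\}$, $X_2=\max\{V_2,V_3\}$. Then $X_1$ and $X_2$ are positive quadrant dependent, i.e. $P(X_1\le x_1,X_2\le x_2)\ge P(X_1\le x_1)P(X_2\le x_2)$ for all $x_1,x_2$.
   Context: The exponentiated discrete Weibull distribution $EDW(\alpha,p,\beta)$ ($\alpha,\beta>0$, $0<p<1$) is the distribution on $\mathbb{N}_0=\{0,1,2,\dots\}$ with cumulative distribution function $F_{EDW}(x;\alpha,p,\beta)=[1-p^{([x]+1)^{\alpha}}]^{\beta}$ for real $x\ge 0$, where $[x]$ is the largest integer $\le x$. *)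

theory Defs
  imports "HOL-Probability.Probability"
begin

definition edw_cdf :: "real \<Rightarrow> real \<Rightarrow> real \<Rightarrow> real \<Rightarrow> real" where
  "edw_cdf \<alpha> p \<beta> x =
     (if x < 0 then 0
      else (1 - p powr ((real_of_int \<lfloor>x\<rfloor> + 1) powr \<alpha>)) powr \<beta>)"

definition has_edw_distribution ::
  "'a measure \<Rightarrow> ('a \<Rightarrow> nat) \<Rightarrow> real \<Rightarrow> real \<Rightarrow> real \<Rightarrow> bool" where
  "has_edw_distribution M V \<alpha> p \<beta> \<longleftrightarrow>
     V \<in> measurable M (count_space UNIV) \<and>
     (\<forall>x::real. measure M {\<omega> \<in> space M. real (V \<omega>) \<le> x} = edw_cdf \<alpha> p \<beta> x)"

end

theory Submission
  imports Defs
begin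

lemma indep_prod3:
  fixes M :: "'a measure" and V :: "nat \<Rightarrow> 'a \<Rightarrow> nat"
  assumes "prob_space M"
    and "prob_space.indep_vars M (\<lambda>_. count_space UNIV) V {1,2,3}"
    and "J \<subseteq> {1,2,3}" and "J \<noteq> {}"
  shows "measure M (\<Inter>j\<in>J. {\<omega> \<in> space M. V j \<omega> \<in> S j})
       = (\<Prod>j\<in>J. measure M {\<omega> \<in> space M. V j \<omega> \<in> S j})"
proof -
  interpret prob_space M by fact
  have "indep_sets (\<lambda>i. sigma_sets (space M) {V i -` A \<inter> space M |A. A \<in> sets (count_space UNIV)}) {1,2,3}"
    using assms(2) unfolding indep_vars_def by blast
  moreover have "finite J" using assms(3) finite_subset by blast
  moreover have "(\<lambda>j. V j -` S j \<inter> space M) \<in> Pi J (\<lambda>i. sigma_sets (space M) {V i -` A \<inter> space M |A. A \<in> sets (count_space UNIV)})"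
    by (auto intro: sigma_sets.Basic)
  ultimately have "prob (\<Inter>j\<in>J. V j -` S j \<inter> space M) = (\<Prod>j\<in>J. prob (V j -` S j \<inter> space M))"
    using assms(3,4) unfolding indep_sets_def by blast
  moreover have "\<And>j. V j -` S j \<inter> space M = {\<omega> \<in> space M. V j \<omega> \<in> S j}" by auto
  ultimately show ?thesis by simp
qed

theorem mainTheorem5:
  fixes M :: "'a measure" and V :: "nat \<Rightarrow> 'a \<Rightarrow> nat"
    and \<alpha> p :: real and \<beta> :: "nat \<Rightarrow> real"
  assumes "prob_space M"
    and "\<alpha> > 0" and "0 < p" and "p < 1"
    and "\<And>i. i \<in> {1,2,3} \<Longrightarrow> \<beta> i > 0"
    and "\<And>i. i \<in> {1,2,3} \<Longrightarrow> has_edw_distribution M (V i) \<alpha> p (\<beta> i)"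
    and "prob_space.indep_vars M (\<lambda>_. count_space UNIV) V {1,2,3}"
  shows "\<forall>x1 x2 :: real.
     measure M {\<omega> \<in> space M. real (max (V 1 \<omega>) (V 3 \<omega>)) \<le> x1 \<and>
                               real (max (V 2 \<omega>) (V 3 \<omega>)) \<le> x2}
     \<ge> measure M {\<omega> \<in> space M. real (max (V 1 \<omega>) (V 3 \<omega>)) \<le> x1}
       * measure M {\<omega> \<in> space M. real (max (V 2 \<omega>) (V 3 \<omega>)) \<le> x2}"
proof (intro allI)
  fix x1 x2 :: real
  interpret P: prob_space M by fact
  define S where "S x = {n::nat. real n \<le> x}" for x
  define P where "P j T = measure M {\<omega> \<in> space M. V j \<omega> \<in> T}" for j T
  have ind: "measure M (\<Inter>j\<in>J. {\<omega> \<in> space M. V j \<omega> \<in> T j}) = (\<Prod>j\<in>J. P j (T j))"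
    if "J \<subseteq> {1,2,3}" "J \<noteq> {}" for J T
    using indep_prod3[OF assms(1,7) that] unfolding P_def by simp
  have e1: "{\<omega> \<in> space M. real (max (V 1 \<omega>) (V 3 \<omega>)) \<le> x1}
     = (\<Inter>j\<in>{1,3}. {\<omega> \<in> space M. V j \<omega> \<in> S x1})"
    by (auto simp: S_def)
  have e2: "{\<omega> \<in> space M. real (max (V 2 \<omega>) (V 3 \<omega>)) \<le> x2}
     = (\<Inter>j\<in>{2,3}. {\<omega> \<in> space M. V j \<omega> \<in> S x2})"
    by (auto simp: S_def)
  define T where "T j = (if j = 1 then S x1 else if j = 2 then S x2 else S x1 \<inter> S x2)" for j :: nat
  have e3: "{\<omega> \<in> space M. real (max (V 1 \<omega>) (V 3 \<omega>)) \<le> x1 \<and>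
                               real (max (V 2 \<omega>) (V 3 \<omega>)) \<le> x2}
     = (\<Inter>j\<in>{1,2,3}. {\<omega> \<in> space M. V j \<omega> \<in> T j})"
    by (auto simp: S_def T_def)
  have m1: "measure M {\<omega> \<in> space M. real (max (V 1 \<omega>) (V 3 \<omega>)) \<le> x1} = P 1 (S x1) * P 3 (S x1)"
    unfolding e1 using ind[of "{1,3}" "\<lambda>_. S x1"] by simp
  have m2: "measure M {\<omega> \<in> space M. real (max (V 2 \<omega>) (V 3 \<omega>)) \<le> x2} = P 2 (S x2) * P 3 (S x2)"
    unfolding e2 using ind[of "{2,3}" "\<lambda>_. S x2"] by simp
  have m3: "measure M {\<omega> \<in> space M. real (max (V 1 \<omega>) (V 3 \<omega>)) \<le> x1 \<and>
                               real (max (V 2 \<omega>) (V 3 \<omega>)) \<le> x2}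
      = P 1 (S x1) * P 2 (S x2) * P 3 (S x1 \<inter> S x2)"
    unfolding e3 using ind[of "{1,2,3}" T] by (simp add: T_def)
  have b: "0 \<le> P j A" "P j A \<le> 1" for j A unfolding P_def by auto
  have q: "P 3 (S x1 \<inter> S x2) \<ge> P 3 (S x1) * P 3 (S x2)"
  proof (cases "x1 \<le> x2")
    case True
    then have "S x1 \<inter> S x2 = S x1" by (auto simp: S_def)
    then show ?thesis using b[of 3] by (simp add: mult_left_le)
  next
    case False
    then have "S x1 \<inter> S x2 = S x2" by (auto simp: S_def)
    then show ?thesis using b[of 3] by (simp add: mult_right_le_one_le mult_left_le_one_le)
  qed
  have "P 1 (S x1) * P 2 (S x2) * (P 3 (S x1) * P 3 (S x2)) \<le> P 1 (S x1) * P 2 (S x2) * P 3 (S x1 \<inter> S x2)"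
    using q b by (intro mult_left_mono) auto
  then show "measure M {\<omega> \<in> space M. real (max (V 1 \<omega>) (V 3 \<omega>)) \<le> x1 \<and>
                               real (max (V 2 \<omega>) (V 3 \<omega>)) \<le> x2}
     \<ge> measure M {\<omega> \<in> space M. real (max (V 1 \<omega>) (V 3 \<omega>)) \<le> x1}
       * measure M {\<omega> \<in> space M. real (max (V 2 \<omega>) (V 3 \<omega>)) \<le> x2}"
    unfolding m1 m2 m3 by (simp add: algebra_simps)
qed

end
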